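(* Let $G=(V,E)$ be a graph with $E=\{e_1,\dots,e_m\}$, let $t\le\lfloor m/2\rfloor$, and let $D=(E,A)$ be the digraph with $A=\{(e_i,e_{i+t}) : i\in\{1,\dots,t\}\}$. Let $\ell,u$ be such that $\ell(e)=u(e)=|\mathrm{dep}(e)|\in\{0,1\}$ for every $e\in E$. Let $S=\{e_i: i\in\{t+1,\dots,2t\}\}$, let $C_1,\dots,C_k$ be the connected components of $G-S$, and let $H$ be the multigraph with vertex set $\{C_1,\dots,C_k\}$ having, for each edge $e\in S$ whose endpoints lie in distinct components $C_i\neq C_j$, one edge between $C_i$ and $C_j$ (edges of $S$ with both endpoints in the same component are discarded). For $S'\subseteq S$, let $H(S')$ be the spanning sub-multigraph of $H$ (vertex set $\{C_1,\dots,C_k\}$) consisting of the edges corresponding to elements of $S'$. If there exists $S'\subseteq S$ such that $H(S')$ is a spanning tree of $H$ and the graph $(V,\mathrm{dep}(S'))$ is acyclic, then $G$ has a spanning tree that $(\ell,u)$-satisfies $D$. Conversely, the edge set of any spanning tree of $G$ that $(\ell,u)$-satisfies $D$ contains such a subset $S'$.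
   Context: For $e\in E$, $\mathrm{dep}(e)=\{e'\in E:(e',e)\in A\}$, and for $E'\subseteq E$, $\mathrm{dep}(E')=\bigcup_{e\in E'}\mathrm{dep}(e)$. A subgraph $T$ of $G$ $(\ell,u)$-satisfies $D$ if $\ell(e)\le|\mathrm{dep}(e)\cap E(T)|\le u(e)$ for every $e\in E(T)$. *)

theory Defs
  imports Main
begin

(* Multigraph given by vertex set W, edge identifiers I, endpoint map ends
   (ends i = set of the two endpoints). A simple graph is the case where edges
   are 2-element vertex sets and ends = id. *)

definition mg_adj :: "'i set \<Rightarrow> ('i \<Rightarrow> 'w set) \<Rightarrow> 'w \<Rightarrow> 'w \<Rightarrow> bool" where
  "mg_adj I ends a b \<longleftrightarrow> (\<exists>i\<in>I. ends i = {a, b})"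

definition mg_connected :: "'w set \<Rightarrow> 'i set \<Rightarrow> ('i \<Rightarrow> 'w set) \<Rightarrow> bool" where
  "mg_connected W I ends \<longleftrightarrow> (\<forall>x\<in>W. \<forall>y\<in>W. (mg_adj I ends)\<^sup>*\<^sup>* x y)"

definition mg_is_cycle :: "'i set \<Rightarrow> ('i \<Rightarrow> 'w set) \<Rightarrow> 'w list \<Rightarrow> 'i list \<Rightarrow> bool" where
  "mg_is_cycle I ends vs es \<longleftrightarrow>
     length vs = length es \<and> length es \<ge> 2 \<and> distinct vs \<and> distinct es \<and> set es \<subseteq> I \<and>
     (\<forall>j<length es. ends (es ! j) = {vs ! j, vs ! ((j + 1) mod length vs)})"

definition mg_acyclic :: "'i set \<Rightarrow> ('i \<Rightarrow> 'w set) \<Rightarrow> bool" where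
  "mg_acyclic I ends \<longleftrightarrow> \<not> (\<exists>vs es. mg_is_cycle I ends vs es)"

definition mg_spanning_tree :: "'w set \<Rightarrow> 'i set \<Rightarrow> ('i \<Rightarrow> 'w set) \<Rightarrow> 'i set \<Rightarrow> bool" where
  "mg_spanning_tree W I ends J \<longleftrightarrow> J \<subseteq> I \<and> mg_connected W J ends \<and> mg_acyclic J ends"

definition dep :: "('e \<times> 'e) set \<Rightarrow> 'e \<Rightarrow> 'e set" where
  "dep A x = {y. (y, x) \<in> A}"

definition dep_set :: "('e \<times> 'e) set \<Rightarrow> 'e set \<Rightarrow> 'e set" where
  "dep_set A X = (\<Union>x\<in>X. dep A x)"

definition lu_satisfies :: "('e \<Rightarrow> nat) \<Rightarrow> ('e \<Rightarrow> nat) \<Rightarrow> ('e \<times> 'e) set \<Rightarrow> 'e set \<Rightarrow> bool" where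
  "lu_satisfies l u A F \<longleftrightarrow>
     (\<forall>x\<in>F. l x \<le> card (dep A x \<inter> F) \<and> card (dep A x \<inter> F) \<le> u x)"

definition component :: "'v set \<Rightarrow> 'v set set \<Rightarrow> 'v \<Rightarrow> 'v set" where
  "component V F x = {y\<in>V. (mg_adj F id)\<^sup>*\<^sup>* x y}"

end

theory Submission
  imports Defs "HOL-Library.Transitive_Closure_Table"
begin

lemma adj_sym: "mg_adj I ends a b \<Longrightarrow> mg_adj I ends b a"
  by (auto simp: mg_adj_def insert_commute)

lemma rtranclp_sym:
  assumes "\<And>x y. R x y \<Longrightarrow> R y x" "R\<^sup>*\<^sup>* a b" shows "R\<^sup>*\<^sup>* b a"
  using assms(2) by induct (auto intro: converse_rtranclp_into_rtranclp assms(1))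

lemma adj_rt_sym: "(mg_adj I ends)\<^sup>*\<^sup>* a b \<Longrightarrow> (mg_adj I ends)\<^sup>*\<^sup>* b a"
  by (rule rtranclp_sym[OF adj_sym])

lemma rtranclp_lift:
  assumes "\<And>x y. R x y \<Longrightarrow> Q\<^sup>*\<^sup>* x y" "R\<^sup>*\<^sup>* a b" shows "Q\<^sup>*\<^sup>* a b"
  using assms(2) by induct (auto intro: rtranclp_trans assms(1))

lemma adj_rt_mono: "I \<subseteq> I' \<Longrightarrow> (mg_adj I ends)\<^sup>*\<^sup>* a b \<Longrightarrow> (mg_adj I' ends)\<^sup>*\<^sup>* a b"
proof -
  assume a: "I \<subseteq> I'" "(mg_adj I ends)\<^sup>*\<^sup>* a b"
  have "mg_adj I' ends x y" if "mg_adj I ends x y" for x y using that a(1) by (auto simp: mg_adj_def)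
  then show ?thesis using rtranclp_lift[OF _ a(2)] by blast
qed

lemma acyclic_mono: "I \<subseteq> I' \<Longrightarrow> mg_acyclic I' ends \<Longrightarrow> mg_acyclic I ends"
  unfolding mg_acyclic_def mg_is_cycle_def by blast

lemma cycle_path:
  assumes cyc: "mg_is_cycle I ends vs es" and j: "j < length es"
  shows "(mg_adj (I - {es!j}) ends)\<^sup>*\<^sup>* (vs!j) (vs!((j+1) mod length vs))"
proof -
  define n where "n = length es"
  let ?R = "mg_adj (I - {es!j}) ends"
  have lv: "length vs = n" and n2: "n \<ge> 2" and de: "distinct es" and sI: "set es \<subseteq> I"
    and en: "\<And>k. k < n \<Longrightarrow> ends (es!k) = {vs!k, vs!((k+1) mod n)}"
    using cyc unfolding mg_is_cycle_def n_def by auto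
  have jn: "j < n" using j n_def by simp
  have main: "k < n \<Longrightarrow> ?R\<^sup>*\<^sup>* (vs!((j+1) mod n)) (vs!((j+1+k) mod n))" for k
  proof (induction k)
    case 0 then show ?case by simp
  next
    case (Suc k)
    define idx where "idx = (j+1+k) mod n"
    have idxn: "idx < n" using n2 idx_def by simp
    have "idx \<noteq> j" unfolding idx_def using jn Suc.prems
      by (cases "j + Suc k < n") (auto simp: mod_if)
    then have neq: "es!idx \<noteq> es!j" using de idxn jn n_def by (simp add: nth_eq_iff_index_eq)
    have inI: "es!idx \<in> I" using sI idxn n_def by auto
    have "(idx + 1) mod n = (j + 1 + Suc k) mod n" unfolding idx_def by (simp add: mod_Suc_eq)
    then have "ends (es!idx) = {vs!idx, vs!((j + 1 + Suc k) mod n)}" using en[OF idxn] by simp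
    then have "?R (vs!idx) (vs!((j + 1 + Suc k) mod n))"
      unfolding mg_adj_def using neq inI by blast
    then show ?case using Suc idx_def by (auto intro: rtranclp.rtrancl_into_rtrancl)
  qed
  have "(j+1+(n-1)) mod n = j" using n2 jn by simp
  then have "?R\<^sup>*\<^sup>* (vs!((j+1) mod n)) (vs!j)" using main[of "n-1"] n2 by simp
  then show ?thesis using lv unfolding n_def by (auto intro: adj_rt_sym)
qed

lemma path_cycle:
  assumes p: "(mg_adj (I - {i}) ends)\<^sup>*\<^sup>* a b" and ei: "ends i = {a,b}" and ab: "a \<noteq> b"
    and iI: "i \<in> I"
  shows "\<not> mg_acyclic I ends"
proof -
  let ?R = "mg_adj (I - {i}) ends"
  obtain ys0 where "rtrancl_path ?R a ys0 b" using p rtranclp_eq_rtrancl_path by metis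
  then obtain ys where rp: "rtrancl_path ?R a ys b" and dist: "distinct (a # ys)"
    using rtrancl_path_distinct by metis
  have ysne: "ys \<noteq> []" using rp ab by (auto elim: rtrancl_path.cases)
  have lst: "last ys = b" using rtrancl_path_last[OF rp ysne] .
  define vs where "vs = a # ys"
  have stp: "\<forall>p. p < length ys \<longrightarrow> ?R (vs!p) (vs!Suc p)"
    using rtrancl_path_nth[OF rp] vs_def by simp
  have "\<forall>p. \<exists>g. p < length ys \<longrightarrow> g \<in> I - {i} \<and> ends g = {vs!p, vs!Suc p}"
    using stp unfolding mg_adj_def by blast
  then obtain g where g: "\<And>p. p < length ys \<Longrightarrow> g p \<in> I - {i} \<and> ends (g p) = {vs!p, vs!Suc p}"
    by metis
  define es where "es = map g [0..<length ys] @ [i]"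
  have dvs: "distinct vs" using dist vs_def by simp
  have inj: "inj_on g {0..<length ys}"
  proof (rule inj_onI)
    fix p q assume pq: "p \<in> {0..<length ys}" "q \<in> {0..<length ys}" "g p = g q"
    then have eq: "{vs!p, vs!Suc p} = {vs!q, vs!Suc q}" using g by (metis atLeastLessThan_iff)
    have lens: "Suc p < length vs" "Suc q < length vs" using pq vs_def by auto
    show "p = q"
    proof (rule ccontr)
      assume "p \<noteq> q"
      with eq lens dvs show False by (auto simp: doubleton_eq_iff nth_eq_iff_index_eq)
    qed
  qed
  have "mg_is_cycle I ends vs es"
    unfolding mg_is_cycle_def
  proof (intro conjI allI impI)
    show "length vs = length es" using vs_def es_def by simp
    show "2 \<le> length es" using ysne es_def by (cases ys) auto
    show "distinct vs" by (rule dvs)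
    have ni: "\<forall>p<length ys. g p \<noteq> i" using g by blast
    then show "distinct es" using inj es_def by (auto simp: distinct_map)
    show "set es \<subseteq> I" using g iI es_def by auto
  next
    fix k assume k: "k < length es"
    show "ends (es ! k) = {vs ! k, vs ! ((k + 1) mod length vs)}"
    proof (cases "k < length ys")
      case True
      then show ?thesis using g[OF True] es_def vs_def by (simp add: nth_append)
    next
      case False
      then have kk: "k = length ys" using k es_def by simp
      have "vs!k = b" using kk lst ysne vs_def by (simp add: last_conv_nth)
      moreover have "es!k = i" using kk es_def by (simp add: nth_append)
      moreover have "(k+1) mod length vs = 0" using kk vs_def by simp
      ultimately show ?thesis using ei vs_def by auto
    qed
  qed
  then show ?thesis unfolding mg_acyclic_def by blast
qed

lemma extend_tree:
  assumes "finite I" "mg_connected W I ends" "F0 \<subseteq> I" "mg_acyclic F0 ends"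
  shows "\<exists>J. F0 \<subseteq> J \<and> J \<subseteq> I \<and> mg_connected W J ends \<and> mg_acyclic J ends"
  using assms
proof (induction "card (I - F0)" arbitrary: I rule: less_induct)
  case less
  show ?case
  proof (cases "mg_acyclic I ends")
    case True thus ?thesis using less by blast
  next
    case False
    then obtain vs es where cyc: "mg_is_cycle I ends vs es" by (auto simp: mg_acyclic_def)
    have "\<exists>j<length es. es!j \<notin> F0"
    proof (rule ccontr)
      assume "\<not> (\<exists>j<length es. es!j \<notin> F0)"
      then have "set es \<subseteq> F0" by (auto simp: in_set_conv_nth)
      then have "mg_is_cycle F0 ends vs es" using cyc by (auto simp: mg_is_cycle_def)
      thus False using less.prems(4) by (auto simp: mg_acyclic_def)
    qed
    then obtain j where j: "j < length es" "es!j \<notin> F0" by blast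
    let ?I' = "I - {es!j}"
    have ej: "es!j \<in> I" using cyc j by (auto simp: mg_is_cycle_def)
    have step: "(mg_adj ?I' ends)\<^sup>*\<^sup>* x y" if "mg_adj I ends x y" for x y
    proof -
      from that obtain k where k: "k \<in> I" "ends k = {x,y}" by (auto simp: mg_adj_def)
      show ?thesis
      proof (cases "k = es!j")
        case False then have "mg_adj ?I' ends x y" using k by (auto simp: mg_adj_def)
        thus ?thesis by simp
      next
        case True
        have p: "(mg_adj ?I' ends)\<^sup>*\<^sup>* (vs!j) (vs!((j+1) mod length vs))"
          by (rule cycle_path[OF cyc j(1)])
        have e: "ends (es!j) = {vs!j, vs!((j+1) mod length vs)}"
          using cyc j by (auto simp: mg_is_cycle_def)
        from True k e have "{x,y} = {vs!j, vs!((j+1) mod length vs)}" by simp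
        then have "(x = vs!j \<and> y = vs!((j+1) mod length vs)) \<or> (x = vs!((j+1) mod length vs) \<and> y = vs!j)"
          by (auto simp: doubleton_eq_iff)
        thus ?thesis using p adj_rt_sym[of "?I'" ends] by blast
      qed
    qed
    have conn: "mg_connected W ?I' ends"
      unfolding mg_connected_def
    proof (intro ballI)
      fix x y assume "x \<in> W" "y \<in> W"
      then have "(mg_adj I ends)\<^sup>*\<^sup>* x y" using less.prems(2) unfolding mg_connected_def by blast
      then show "(mg_adj ?I' ends)\<^sup>*\<^sup>* x y" using rtranclp_lift[where R="mg_adj I ends" and Q="mg_adj ?I' ends"] step by blast
    qed
    have "?I' - F0 = (I - F0) - {es!j}" by blast
    moreover have "es!j \<in> I - F0" using ej j by blast
    ultimately have "card (?I' - F0) < card (I - F0)"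
      using less.prems(1) by (metis card_Diff1_less finite_Diff)
    have f': "finite ?I'" using less.prems(1) by simp
    have s': "F0 \<subseteq> ?I'" using less.prems(3) j(2) by blast
    obtain J where "F0 \<subseteq> J" "J \<subseteq> ?I'" "mg_connected W J ends" "mg_acyclic J ends"
      using less.hyps[OF \<open>card (?I' - F0) < card (I - F0)\<close> f' conn s' less.prems(4)] by blast
    then show ?thesis by blast
  qed
qed


theorem lemma2:
  fixes V :: "'v set" and E :: "'v set set" and e :: "nat \<Rightarrow> 'v set"
    and m t :: nat and A :: "('v set \<times> 'v set) set" and l u :: "'v set \<Rightarrow> nat"
    and S :: "'v set set"
  assumes finV: "finite V"
    and graph: "\<forall>x\<in>E. x \<subseteq> V \<and> card x = 2"
    and enum: "bij_betw e {1..m} E"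
    and t: "t \<le> m div 2"
    and A_def: "A = {(e i, e (i + t)) | i. i \<in> {1..t}}"
    and lu: "\<forall>x\<in>E. l x = card (dep A x) \<and> u x = card (dep A x) \<and> card (dep A x) \<in> {0, 1}"
    and S_def: "S = {e i | i. i \<in> {t+1..2*t}}"
  defines "cmp \<equiv> component V (E - S)"
  defines "SH \<equiv> {f\<in>S. \<forall>x\<in>f. \<forall>y\<in>f. x \<noteq> y \<longrightarrow> cmp x \<noteq> cmp y}"
  defines "HS S' \<equiv> mg_spanning_tree (cmp ` V) SH (\<lambda>f. cmp ` f) (S' \<inter> SH)
                     \<and> mg_acyclic (dep_set A S') id"
  shows "((\<exists>S'\<subseteq>S. HS S') \<longrightarrow>
           (\<exists>F. mg_spanning_tree V E id F \<and> lu_satisfies l u A F))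
       \<and> (\<forall>F. mg_spanning_tree V E id F \<and> lu_satisfies l u A F \<longrightarrow>
           (\<exists>S'\<subseteq>F \<inter> S. HS S'))"
proof -
  let ?R = "mg_adj (E - S) id"
  let ?ends = "\<lambda>f. cmp ` f"
  have EP: "E \<subseteq> Pow V" using graph by blast
  have finE: "finite E" using finite_subset[OF EP] finV by simp
  have inj: "inj_on e {1..m}" and img: "e ` {1..m} = E" using enum by (auto simp: bij_betw_def)
  have t2: "2 * t \<le> m" using t by simp
  have depeq: "dep A x = {e i | i. i \<in> {1..t} \<and> e (i+t) = x}" for x
    by (auto simp: dep_def A_def)
  have depE: "dep A x \<subseteq> E - S" for x
  proof
    fix y assume "y \<in> dep A x"
    then obtain i where i: "i \<in> {1..t}" "y = e i" using depeq by auto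
    have "i \<in> {1..m}" using i t2 by auto
    then have yE: "y \<in> E" using img i by auto
    have "y \<notin> S"
    proof
      assume "y \<in> S"
      then obtain j where j: "j \<in> {t+1..2*t}" "y = e j" using S_def by auto
      have "j \<in> {1..m}" using j t2 by auto
      moreover have "e i = e j" using i(2) j(2) by simp
      ultimately have "i = j" using inj_onD[OF inj _ \<open>i \<in> {1..m}\<close>] by blast
      then show False using i j by auto
    qed
    then show "y \<in> E - S" using yE by auto
  qed
  have depnS: "dep A x = {}" if xS: "x \<notin> S" for x
  proof (rule ccontr)
    assume "dep A x \<noteq> {}"
    then obtain i where i: "i \<in> {1..t}" "e (i+t) = x" using depeq by blast
    then have "i + t \<in> {t+1..2*t}" by auto
    then have "x \<in> S" using i(2) S_def by blast
    then show False using xS by simp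
  qed
  have depfin: "finite (dep A x)" for x
  proof -
    have "dep A x \<subseteq> e ` {1..t}" using depeq by auto
    then show ?thesis by (rule finite_subset) simp
  qed
  have depsetE: "dep_set A X \<subseteq> E - S" for X using depE by (auto simp: dep_set_def)
  have SE: "S \<subseteq> E" using S_def img t2 by force
  have SHS: "SH \<subseteq> S" unfolding SH_def by auto
  have Rsym: "?R x y \<Longrightarrow> ?R y x" for x y by (rule adj_sym)
  have cmp_eq: "?R\<^sup>*\<^sup>* y z \<Longrightarrow> cmp y = cmp z" for y z
  proof -
    assume yz: "?R\<^sup>*\<^sup>* y z"
    then have zy: "?R\<^sup>*\<^sup>* z y" by (rule adj_rt_sym)
    show ?thesis unfolding cmp_def component_def
      using yz zy by (auto intro: rtranclp_trans)
  qed
  have same_cmp: "x \<in> V \<Longrightarrow> y \<in> V \<Longrightarrow> cmp x = cmp y \<Longrightarrow> ?R\<^sup>*\<^sup>* x y" for x y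
  proof -
    assume a: "x \<in> V" "y \<in> V" "cmp x = cmp y"
    have "y \<in> cmp y" using a unfolding cmp_def component_def by auto
    then have "y \<in> cmp x" using a by simp
    then show ?thesis unfolding cmp_def component_def by auto
  qed
  have edge2: "f \<in> E \<Longrightarrow> \<exists>a b. a \<noteq> b \<and> f = {a,b} \<and> a \<in> V \<and> b \<in> V" for f
    using graph by (metis card_2_iff insert_subset)
  have edge_same: "f \<in> E \<Longrightarrow> f = {y,z} \<Longrightarrow> f \<notin> SH \<Longrightarrow> cmp y = cmp z" for f y z
  proof -
    assume f: "f \<in> E" "f = {y,z}" "f \<notin> SH"
    show ?thesis
    proof (cases "f \<in> S")
      case False
      then have "?R y z" using f unfolding mg_adj_def by auto
      then show ?thesis using cmp_eq by blast
    next
      case True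
      then obtain p q where "p \<in> f" "q \<in> f" "p \<noteq> q" "cmp p = cmp q"
        using f(3) unfolding SH_def by blast
      then show ?thesis using f(2) by auto
    qed
  qed
  have proj: "K \<subseteq> E \<Longrightarrow> (mg_adj K id)\<^sup>*\<^sup>* x y \<Longrightarrow>
      (mg_adj (K \<inter> SH) ?ends)\<^sup>*\<^sup>* (cmp x) (cmp y)" for K x y
  proof -
    assume K: "K \<subseteq> E" and p: "(mg_adj K id)\<^sup>*\<^sup>* x y"
    from p show ?thesis
    proof induct
      case base then show ?case by simp
    next
      case (step y z)
      from step(2) obtain f where f: "f \<in> K" "f = {y,z}" unfolding mg_adj_def by auto
      show ?case
      proof (cases "f \<in> SH")
        case True
        then have "mg_adj (K \<inter> SH) ?ends (cmp y) (cmp z)"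
          using f unfolding mg_adj_def by (intro bexI[of _ f]) auto
        then show ?thesis by (rule rtranclp.rtrancl_into_rtrancl[OF step(3)])
      next
        case False
        have "f \<in> E" using f(1) K by blast
        then have "cmp y = cmp z" using edge_same[OF _ f(2) False] by blast
        then show ?thesis using step(3) by simp
      qed
    qed
  qed
  have lift: "T \<subseteq> SH \<Longrightarrow> (mg_adj T ?ends)\<^sup>*\<^sup>* C D \<Longrightarrow>
     \<forall>x\<in>V. \<forall>y\<in>V. cmp x = C \<longrightarrow> cmp y = D \<longrightarrow> (mg_adj (T \<union> (E - S)) id)\<^sup>*\<^sup>* x y" for T C D
  proof -
    assume T: "T \<subseteq> SH" and p: "(mg_adj T ?ends)\<^sup>*\<^sup>* C D"
    from p show ?thesis
    proof induct
      case base
      show ?case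
      proof (intro ballI impI)
        fix x y assume xy: "x \<in> V" "y \<in> V" "cmp x = C" "cmp y = C"
        then have "?R\<^sup>*\<^sup>* x y" using same_cmp[of x y] by simp
        then show "(mg_adj (T \<union> (E - S)) id)\<^sup>*\<^sup>* x y"
          by (rule adj_rt_mono[rotated]) blast
      qed
    next
      case (step C' D)
      show ?case
      proof (intro ballI impI)
        fix x y assume xy: "x \<in> V" "y \<in> V" "cmp x = C" "cmp y = D"
        from step(2) obtain f where f: "f \<in> T" "cmp ` f = {C', D}" unfolding mg_adj_def by blast
        have "f \<in> E" using f(1) T SHS SE by blast
        then obtain a b where ab: "a \<noteq> b" "f = {a,b}" "a \<in> V" "b \<in> V" using edge2 by blast
        have "cmp ` f = {cmp a, cmp b}" using ab(2) by simp
        then have "{cmp a, cmp b} = {C', D}" using f(2) by simp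
        then have "(cmp a = C' \<and> cmp b = D) \<or> (cmp a = D \<and> cmp b = C')"
          by (simp only: doubleton_eq_iff)
        moreover have "f = {b, a}" using ab(2) by (simp only: insert_commute)
        ultimately have "\<exists>a' b'. f = {a', b'} \<and> a' \<in> V \<and> b' \<in> V \<and> cmp a' = C' \<and> cmp b' = D"
          using ab by blast
        then obtain a' b' where ab': "f = {a', b'}" "a' \<in> V" "b' \<in> V" "cmp a' = C'" "cmp b' = D"
          by blast
        have 1: "(mg_adj (T \<union> (E - S)) id)\<^sup>*\<^sup>* x a'" using step(3) xy ab' by blast
        have 2: "mg_adj (T \<union> (E - S)) id a' b'" using f ab' unfolding mg_adj_def by auto
        have 3: "(mg_adj (T \<union> (E - S)) id)\<^sup>*\<^sup>* b' y"
          using same_cmp[of b' y] ab' xy adj_rt_mono[of "E - S" "T \<union> (E - S)"] by auto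
        show "(mg_adj (T \<union> (E - S)) id)\<^sup>*\<^sup>* x y" using 1 2 3
          by (meson rtranclp.rtrancl_into_rtrancl rtranclp_trans)
      qed
    qed
  qed
  show ?thesis
  proof (intro conjI allI impI)
    assume "\<exists>S'\<subseteq>S. HS S'"
    then obtain S' where S': "S' \<subseteq> S" "HS S'" by blast
    define T where "T = S' \<inter> SH"
    have TSH: "T \<subseteq> SH" and Tconn: "mg_connected (cmp ` V) T ?ends"
      and Tac: "mg_acyclic T ?ends" and depac: "mg_acyclic (dep_set A S') id"
      using S'(2) unfolding HS_def T_def mg_spanning_tree_def by auto
    define F0 where "F0 = T \<union> dep_set A T"
    define I where "I = T \<union> (E - S)"
    have TE: "T \<subseteq> E" using TSH SHS SE by auto
    have F0I: "F0 \<subseteq> I" using depsetE unfolding F0_def I_def by auto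
    have finI: "finite I" using finE TE unfolding I_def by (auto intro: finite_subset)
    have Iconn: "mg_connected V I id"
      unfolding mg_connected_def I_def
    proof (intro ballI)
      fix x y assume "x \<in> V" "y \<in> V"
      then have "(mg_adj T ?ends)\<^sup>*\<^sup>* (cmp x) (cmp y)" using Tconn unfolding mg_connected_def by auto
      then show "(mg_adj (T \<union> (E - S)) id)\<^sup>*\<^sup>* x y" using lift[OF TSH] \<open>x \<in> V\<close> \<open>y \<in> V\<close> by blast
    qed
    have dTS: "dep_set A T \<subseteq> dep_set A S'" unfolding T_def dep_set_def by auto
    have F0SH: "F0 \<inter> SH = T" using depsetE SHS TSH unfolding F0_def by auto
    have F0E: "F0 \<subseteq> E" using F0I TE unfolding I_def by auto
    have F0ac: "mg_acyclic F0 id"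
      unfolding mg_acyclic_def
    proof
      assume "\<exists>vs es. mg_is_cycle F0 id vs es"
      then obtain vs es where cyc: "mg_is_cycle F0 id vs es" by blast
      show False
      proof (cases "\<exists>j<length es. es!j \<in> T")
        case True
        then obtain j where j: "j < length es" "es!j \<in> T" by blast
        define f where "f = es!j"
        define a where "a = vs!j"
        define b where "b = vs!((j+1) mod length vs)"
        have p: "(mg_adj (F0 - {f}) id)\<^sup>*\<^sup>* a b"
          using cycle_path[OF cyc j(1)] unfolding f_def a_def b_def .
        have lv: "length vs = length es" "length es \<ge> 2" "distinct vs"
          using cyc unfolding mg_is_cycle_def by auto
        have fab: "f = {a,b}" using cyc j unfolding mg_is_cycle_def f_def a_def b_def by auto
        have "j \<noteq> (j+1) mod length vs" using lv j by (cases "Suc j = length vs") auto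
        moreover have bi: "(j+1) mod length vs < length vs" using lv by (intro mod_less_divisor) linarith
        ultimately have ab: "a \<noteq> b" unfolding a_def b_def
          using nth_eq_iff_index_eq[OF lv(3), of j "(j+1) mod length vs"] j lv(1) by simp
        have fSH: "f \<in> SH" using j TSH f_def by auto
        then have cab: "cmp a \<noteq> cmp b" using fab ab unfolding SH_def by auto
        have "(mg_adj ((F0 - {f}) \<inter> SH) ?ends)\<^sup>*\<^sup>* (cmp a) (cmp b)"
          using proj[OF _ p] F0E by auto
        moreover have "(F0 - {f}) \<inter> SH = T - {f}" using F0SH by auto
        ultimately have "(mg_adj (T - {f}) ?ends)\<^sup>*\<^sup>* (cmp a) (cmp b)" by simp
        moreover have "?ends f = {cmp a, cmp b}" using fab by auto
        ultimately have "\<not> mg_acyclic T ?ends"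
          using path_cycle[of T f ?ends "cmp a" "cmp b"] cab j f_def by auto
        then show False using Tac by simp
      next
        case False
        have "set es \<subseteq> dep_set A S'"
        proof
          fix g assume g: "g \<in> set es"
          then obtain k where k: "k < length es" "es!k = g" by (auto simp: in_set_conv_nth)
          have "g \<notin> T" using False k by blast
          moreover have "g \<in> T \<union> dep_set A T" using cyc g unfolding mg_is_cycle_def F0_def by blast
          ultimately show "g \<in> dep_set A S'" using dTS by blast
        qed
        then have "mg_is_cycle (dep_set A S') id vs es" using cyc unfolding mg_is_cycle_def by auto
        then show False using depac unfolding mg_acyclic_def by blast
      qed
    qed
    obtain J where J: "F0 \<subseteq> J" "J \<subseteq> I" "mg_connected V J id" "mg_acyclic J id"
      using extend_tree[OF finI Iconn F0I F0ac] by blast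
    have JE: "J \<subseteq> E" using J(2) TE unfolding I_def by auto
    have depJ: "dep A x \<subseteq> J" if "x \<in> J" for x
    proof (cases "x \<in> T")
      case True
      then have "dep A x \<subseteq> dep_set A T" unfolding dep_set_def by auto
      then show ?thesis using J(1) unfolding F0_def by auto
    next
      case False
      then have "x \<notin> S" using that J(2) unfolding I_def by auto
      then show ?thesis using depnS by auto
    qed
    have "lu_satisfies l u A J"
      unfolding lu_satisfies_def
    proof
      fix x assume x: "x \<in> J"
      then have "dep A x \<inter> J = dep A x" using depJ by auto
      then show "l x \<le> card (dep A x \<inter> J) \<and> card (dep A x \<inter> J) \<le> u x"
        using lu x JE by auto
    qed
    then show "\<exists>F. mg_spanning_tree V E id F \<and> lu_satisfies l u A F"
      using J JE unfolding mg_spanning_tree_def by blast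
  next
    fix F assume F: "mg_spanning_tree V E id F \<and> lu_satisfies l u A F"
    have FE: "F \<subseteq> E" and Fconn: "mg_connected V F id" and Fac: "mg_acyclic F id"
      and Fsat: "lu_satisfies l u A F" using F unfolding mg_spanning_tree_def by auto
    define K where "K = F \<inter> SH"
    have Kconn: "mg_connected (cmp ` V) K ?ends"
      unfolding mg_connected_def K_def
    proof (intro ballI)
      fix C D assume "C \<in> cmp ` V" "D \<in> cmp ` V"
      then obtain x y where "x \<in> V" "y \<in> V" "C = cmp x" "D = cmp y" by blast
      then show "(mg_adj (F \<inter> SH) ?ends)\<^sup>*\<^sup>* C D"
        using proj[OF FE] Fconn unfolding mg_connected_def by blast
    qed
    have finK: "finite K" using finE FE unfolding K_def by (auto intro: finite_subset)
    have ac0: "mg_acyclic {} ?ends" unfolding mg_acyclic_def mg_is_cycle_def by auto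
    obtain J where J: "J \<subseteq> K" "mg_connected (cmp ` V) J ?ends" "mg_acyclic J ?ends"
      using extend_tree[OF finK Kconn _ ac0] by blast
    have JSH: "J \<inter> SH = J" using J(1) unfolding K_def by auto
    have depF: "dep A x \<subseteq> F" if "x \<in> J" for x
    proof -
      have xF: "x \<in> F" using that J(1) unfolding K_def by auto
      then have "l x \<le> card (dep A x \<inter> F)" using Fsat unfolding lu_satisfies_def by auto
      moreover have "l x = card (dep A x)" using lu xF FE by auto
      ultimately have "card (dep A x) \<le> card (dep A x \<inter> F)" by simp
      then have "dep A x \<inter> F = dep A x"
        using depfin by (metis Int_lower1 card_seteq)
      then show ?thesis by blast
    qed
    have "dep_set A J \<subseteq> F" using depF unfolding dep_set_def by auto
    then have "mg_acyclic (dep_set A J) id" using acyclic_mono Fac by blast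
    then have "HS J" unfolding HS_def mg_spanning_tree_def using J JSH K_def by auto
    moreover have "J \<subseteq> F \<inter> S" using J(1) SHS unfolding K_def by auto
    ultimately show "\<exists>S'\<subseteq>F \<inter> S. HS S'" by blast
  qed
qed

end
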